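(* Let $X$ be a set, let $T:\mathcal P(X)\to\mathcal P(X)$ be an order reversing quasi involution, and let $R:\mathcal P(X)\to\mathcal P(X)$ be a complemented order reversing quasi involution. Then the composition $T\circ R\circ T$ is an order reversing quasi involution, and the composition $R\circ T\circ R$ is a complemented order reversing quasi involution.
   Context: $\mathcal P(X)$ denotes the power set of $X$. A map $T:\mathcal P(X)\to\mathcal P(X)$ is an order reversing quasi involution if for all $K,L\subseteq X$: $K\subseteq TTK$, and $L\subseteq K$ implies $TK\subseteq TL$. A map $R:\mathcal P(X)\to\mathcal P(X)$ is a complemented order reversing quasi involution if for all $K,L\subseteq X$: $RRK\subseteq K$, and $L\subseteq K$ implies $RK\subseteq RL$. *)

theory Defs
  imports Main
begin

(* The ambient set X is represented by the universe of the type 'a, so that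
   P(X) is the type 'a set and maps P(X) -> P(X) are functions 'a set => 'a set. *)

definition order_reversing_quasi_involution :: "('a set \<Rightarrow> 'a set) \<Rightarrow> bool" where
  "order_reversing_quasi_involution T \<longleftrightarrow>
     (\<forall>K. K \<subseteq> T (T K)) \<and> (\<forall>K L. L \<subseteq> K \<longrightarrow> T K \<subseteq> T L)"

definition complemented_order_reversing_quasi_involution :: "('a set \<Rightarrow> 'a set) \<Rightarrow> bool" where
  "complemented_order_reversing_quasi_involution R \<longleftrightarrow>
     (\<forall>K. R (R K) \<subseteq> K) \<and> (\<forall>K L. L \<subseteq> K \<longrightarrow> R K \<subseteq> R L)"

end

theory Submission
  imports Defs
begin

theorem lemma8p12:
  fixes T R :: "'a set \<Rightarrow> 'a set"
  assumes "order_reversing_quasi_involution T"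
    and "complemented_order_reversing_quasi_involution R"
  shows "order_reversing_quasi_involution (T \<circ> R \<circ> T) \<and>
         complemented_order_reversing_quasi_involution (R \<circ> T \<circ> R)"
proof -
  have T1: "\<And>K. K \<subseteq> T (T K)" and T2: "\<And>K L. L \<subseteq> K \<Longrightarrow> T K \<subseteq> T L"
    using assms(1) unfolding order_reversing_quasi_involution_def by blast+
  have R1: "\<And>K. R (R K) \<subseteq> K" and R2: "\<And>K L. L \<subseteq> K \<Longrightarrow> R K \<subseteq> R L"
    using assms(2) unfolding complemented_order_reversing_quasi_involution_def by blast+
  have a: "K \<subseteq> T (R (T (T (R (T K)))))" for K
  proof -
    have "R (T (T (R (T K)))) \<subseteq> R (R (T K))" by (rule R2[OF T1])
    also have "\<dots> \<subseteq> T K" by (rule R1)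
    finally have "T (T K) \<subseteq> T (R (T (T (R (T K)))))" by (rule T2)
    with T1[of K] show ?thesis by blast
  qed
  have b: "R (T (R (R (T (R K))))) \<subseteq> K" for K
  proof -
    have "T (T (R K)) \<subseteq> T (R (R (T (R K))))" by (rule T2[OF R1])
    with T1[of "R K"] have "R K \<subseteq> T (R (R (T (R K))))" by blast
    then have "R (T (R (R (T (R K))))) \<subseteq> R (R K)" by (rule R2)
    with R1[of K] show ?thesis by blast
  qed
  show ?thesis
    unfolding order_reversing_quasi_involution_def
      complemented_order_reversing_quasi_involution_def
    using a b T2 R2 by (simp add: T2 R2)
qed

end
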